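(* Assume (H1), (H2.1), (H2.4) and (H3.1). Then there exists a positive integer $N_{0}$ such that, for any $N\ge N_{0}$, the operator $I_{X^{+}}-\mathcal{L}_{N}^{+}\mathcal{F}_{s}V^{+}\colon X^{+}\to X^{+}$ is invertible and $$\|(I_{X^{+}}-\mathcal{L}_{N}^{+}\mathcal{F}_{s}V^{+})^{-1}\|_{X^{+}\leftarrow X^{+}}\le 2\|(I_{X^{+}}-\mathcal{F}_{s}V^{+})^{-1}\|_{X^{+}\leftarrow X^{+}}.$$ Moreover, for each $\phi\in\widehat{X}$, the equation $z=\mathcal{L}_{N}^{+}\mathcal{F}_{s}V(\phi,z)$ has a unique solution $w^{\ast}\in X^{+}$ and $$\|w^{\ast}-z^{\ast}\|_{X^{+}}\le 2\|(I_{X^{+}}-\mathcal{F}_{s}V^{+})^{-1}\|_{X^{+}\leftarrow X^{+}}\,\|\mathcal{L}_{N}^{+}z^{\ast}-z^{\ast}\|_{X^{+}},$$ where $z^{\ast}\in X^{+}$ is the unique solution of $z=\mathcal{F}_{s}V(\phi,z)$.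
   Context: Let $d\ge 1$ be an integer and $\tau>0$, $h>0$ real. $X$, $X^{+}$, $X^{\pm}$ are real normed spaces of functions $[-\tau,0]\to\mathbb{R}^{d}$, $[0,h]\to\mathbb{R}^{d}$, $[-\tau,h]\to\mathbb{R}^{d}$, respectively. $V\colon X\times X^{+}\to X^{\pm}$ and $\mathcal{F}_{s}\colon X^{\pm}\to X^{+}$ are linear operators with $V(\phi,z)|_{[-\tau,0]}=\phi$; $V^{-}\phi:=V(\phi,0_{X^{+}})$, $V^{+}z:=V(0_{X},z)$, so $V(\phi,z)=V^{-}\phi+V^{+}z$. Let $\widetilde{X}^{+}$ be a linear subspace of $X^{+}$. For $N\in\mathbb{N}$, $X_{N}^{+}$ is a finite-dimensional space, $R_{N}^{+}\colon\widetilde{X}^{+}\to X_{N}^{+}$ and $P_{N}^{+}\colon X_{N}^{+}\to X^{+}$ are linear with $R_{N}^{+}P_{N}^{+}=I_{X_{N}^{+}}$, and $\mathcal{L}_{N}^{+}:=P_{N}^{+}R_{N}^{+}$. Hypotheses: (H1) $I_{X^{+}}-\mathcal{F}_{s}V^{+}\colon X^{+}\to X^{+}$ is invertible with bounded inverse, and for each $\phi\in X$ the equation $z=\mathcal{F}_{s}V(\phi,z)$ has a unique solution in $X^{+}$. There is a linear subspace $\widehat{X}^{+}\subseteq\widetilde{X}^{+}$ with a norm $\|\cdot\|_{\widehat{X}^{+}}$ making it complete such that: (H2.1) $\|(\mathcal{L}_{N}^{+}-I_{X^{+}})|_{\widehat{X}^{+}}\|_{X^{+}\leftarrow\widehat{X}^{+}}\to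 0$ as $N\to+\infty$; (H2.4) the range of $\mathcal{F}_{s}V^{+}\colon X^{+}\to X^{+}$ is contained in $\widehat{X}^{+}$ and $\mathcal{F}_{s}V^{+}\colon X^{+}\to\widehat{X}^{+}$ is bounded. There is a linear subspace $\widehat{X}\subseteq X$ with a norm making it complete such that: (H3.1) the range of $\mathcal{F}_{s}V^{-}|_{\widehat{X}}$ is contained in $\widehat{X}^{+}$ and $\mathcal{F}_{s}V^{-}|_{\widehat{X}}\colon\widehat{X}\to\widehat{X}^{+}$ is bounded. *)

theory Defs
  imports "HOL-Analysis.Analysis"
begin

definition normed_subspace :: "'a::real_vector set \<Rightarrow> ('a \<Rightarrow> real) \<Rightarrow> bool" where
  "normed_subspace S n \<longleftrightarrow> subspace S
     \<and> (\<forall>x\<in>S. 0 \<le> n x)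
     \<and> (\<forall>x\<in>S. n x = 0 \<longleftrightarrow> x = 0)
     \<and> (\<forall>x\<in>S. \<forall>c. n (c *\<^sub>R x) = \<bar>c\<bar> * n x)
     \<and> (\<forall>x\<in>S. \<forall>y\<in>S. n (x + y) \<le> n x + n y)"

definition banach_subspace :: "'a::real_vector set \<Rightarrow> ('a \<Rightarrow> real) \<Rightarrow> bool" where
  "banach_subspace S n \<longleftrightarrow> normed_subspace S n
     \<and> (\<forall>f::nat \<Rightarrow> 'a. (\<forall>k. f k \<in> S) \<and> (\<forall>e::real>0. \<exists>M. \<forall>m\<ge>M. \<forall>k\<ge>M. n (f m - f k) < e)
            \<longrightarrow> (\<exists>l\<in>S. \<forall>e::real>0. \<exists>M. \<forall>k\<ge>M. n (f k - l) < e))"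

definition linear_on_sub :: "'a::real_vector set \<Rightarrow> ('a \<Rightarrow> 'b::real_vector) \<Rightarrow> bool" where
  "linear_on_sub S f \<longleftrightarrow> (\<forall>x\<in>S. \<forall>y\<in>S. f (x + y) = f x + f y)
     \<and> (\<forall>x\<in>S. \<forall>c. f (c *\<^sub>R x) = c *\<^sub>R f x)"

end

theory Submission
  imports Defs
begin

lemma fin_surj:
  fixes T :: "'a::real_vector \<Rightarrow> 'a"
  assumes lin: "linear T" and inj: "inj T" and fin: "finite C" and sub: "T ` span C \<subseteq> span C"
  shows "span C \<subseteq> T ` span C"
proof -
  obtain B where B: "B \<subseteq> span C" "independent B" "span C \<subseteq> span B"
    using maximal_independent_subset[of "span C"] by blast
  have spB: "span B = span C"
    using B by (metis span_eq span_span)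
  have finB: "finite B" and cB: "card B \<le> card C"
    using independent_span_bound[OF fin B(2) B(1)] by auto
  have indT: "independent (T ` B)"
    using linear_independent_injective_image[OF lin B(2)] inj by (meson inj_on_subset subset_UNIV)
  have cTB: "card (T ` B) = card B"
    using card_image inj by (metis inj_on_subset subset_UNIV)
  have TBsub: "T ` B \<subseteq> span C"
    using sub B(1) spB span_superset by blast
  have "span C \<subseteq> span (T ` B)"
  proof
    fix x assume x: "x \<in> span C"
    show "x \<in> span (T ` B)"
    proof (rule ccontr)
      assume nx: "x \<notin> span (T ` B)"
      then have xn: "x \<notin> T ` B" using span_superset by blast
      have "independent (insert x (T ` B))"
        using indT nx xn by (simp add: independent_insert)
      moreover have "insert x (T ` B) \<subseteq> span B" using x TBsub spB by auto
      ultimately have "card (insert x (T ` B)) \<le> card B"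
        using independent_span_bound[OF finB] by blast
      moreover have "card (insert x (T ` B)) = card B + 1"
        using xn cTB finB by simp
      ultimately show False by simp
    qed
  qed
  also have "span (T ` B) = T ` span C"
    using span_linear_image[OF lin] spB by simp
  finally show ?thesis .
qed


lemma image_span_sub:
  fixes P :: "'a::real_vector \<Rightarrow> 'b::real_vector"
  assumes "linear_on_sub (span B) P"
  shows "P ` span B \<subseteq> span (P ` B)"
proof -
  have add: "\<And>x y. x \<in> span B \<Longrightarrow> y \<in> span B \<Longrightarrow> P (x + y) = P x + P y"
   and sc: "\<And>x c. x \<in> span B \<Longrightarrow> P (c *\<^sub>R x) = c *\<^sub>R P x"
    using assms unfolding linear_on_sub_def by auto
  have P0: "P 0 = 0" using sc[OF span_zero[of B], of 0] by simp
  have "\<And>x. x \<in> span B \<Longrightarrow> x \<in> span B \<and> P x \<in> span (P ` B)"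
  proof -
    fix x assume "x \<in> span B"
    then show "x \<in> span B \<and> P x \<in> span (P ` B)"
    proof (induction rule: span_induct_alt)
      case base then show ?case using P0 by (simp add: real_vector.span_zero)
    next
      case (step c x y)
      have xs: "x \<in> span B" using step(1) span_superset by blast
      have "P (c *\<^sub>R x + y) = c *\<^sub>R P x + P y"
        using add[of "c *\<^sub>R x" y] sc[OF xs] step(2) xs span_scale by auto
      moreover have "P x \<in> span (P ` B)" using step(1) span_superset by blast
      ultimately show ?case using step(2) xs
        by (simp add: span_add span_scale)
    qed
  qed
  then show ?thesis by blast
qed

theorem proposition4p3:
  fixes V :: "'x::real_normed_vector \<Rightarrow> 'xp::real_normed_vector \<Rightarrow> 'xpm::real_normed_vector"
    and Fs :: "'xpm \<Rightarrow> 'xp"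
    and Xt :: "'xp set"
    and XN :: "nat \<Rightarrow> 'xn::real_vector set"
    and R :: "nat \<Rightarrow> 'xp \<Rightarrow> 'xn"
    and P :: "nat \<Rightarrow> 'xn \<Rightarrow> 'xp"
    and Xh :: "'xp set" and nh :: "'xp \<Rightarrow> real"
    and XhX :: "'x set" and nhX :: "'x \<Rightarrow> real"
  assumes V_lin: "linear (\<lambda>(\<phi>, z). V \<phi> z)"
    and Fs_lin: "linear Fs"
    and Xt_sub: "subspace Xt"
    and XN_fin: "\<And>N. subspace (XN N) \<and> (\<exists>B. finite B \<and> XN N = span B)"
    and R_lin: "\<And>N. linear_on_sub Xt (R N)"
    and R_range: "\<And>N. R N ` Xt \<subseteq> XN N"
    and P_lin: "\<And>N. linear_on_sub (XN N) (P N)"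
    and RP: "\<And>N y. y \<in> XN N \<Longrightarrow> R N (P N y) = y"
    \<comment> \<open>(H1)\<close>
    and H1a: "bij (\<lambda>z. z - Fs (V 0 z)) \<and> bounded_linear (inv (\<lambda>z. z - Fs (V 0 z)))"
    and H1b: "\<And>\<phi>. \<exists>!z. z = Fs (V \<phi> z)"
    \<comment> \<open>hat X+\<close>
    and Xh_sub: "Xh \<subseteq> Xt"
    and Xh_banach: "banach_subspace Xh nh"
    \<comment> \<open>(H2.1): the operator norm of (L_N - I) restricted to hat X+ tends to 0\<close>
    and H21: "\<And>\<epsilon>. \<epsilon> > 0 \<Longrightarrow> \<exists>M. \<forall>N\<ge>M. \<forall>x\<in>Xh. norm (P N (R N x) - x) \<le> \<epsilon> * nh x"
    \<comment> \<open>(H2.4)\<close>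
    and H24a: "\<And>z. Fs (V 0 z) \<in> Xh"
    and H24b: "\<exists>K. \<forall>z. nh (Fs (V 0 z)) \<le> K * norm z"
    \<comment> \<open>hat X and (H3.1)\<close>
    and XhX_sub: "subspace XhX"
    and XhX_banach: "banach_subspace XhX nhX"
    and H31a: "\<And>\<phi>. \<phi> \<in> XhX \<Longrightarrow> Fs (V \<phi> 0) \<in> Xh"
    and H31b: "\<exists>K. \<forall>\<phi>\<in>XhX. nh (Fs (V \<phi> 0)) \<le> K * nhX \<phi>"
  shows "\<exists>N0::nat. N0 > 0 \<and> (\<forall>N\<ge>N0.
      bij (\<lambda>z. z - P N (R N (Fs (V 0 z))))
      \<and> bounded_linear (inv (\<lambda>z. z - P N (R N (Fs (V 0 z)))))
      \<and> onorm (inv (\<lambda>z. z - P N (R N (Fs (V 0 z)))))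
          \<le> 2 * onorm (inv (\<lambda>z. z - Fs (V 0 z)))
      \<and> (\<forall>\<phi>\<in>XhX. (\<exists>!w. w = P N (R N (Fs (V \<phi> w))))
          \<and> (\<forall>w zs. w = P N (R N (Fs (V \<phi> w))) \<longrightarrow> zs = Fs (V \<phi> zs) \<longrightarrow>
               norm (w - zs) \<le> 2 * onorm (inv (\<lambda>z. z - Fs (V 0 z)))
                                 * norm (P N (R N zs) - zs))))"
proof -
  have Vadd: "V (a + b) (c + d) = V a c + V b d" for a b c d
    using linear_add[OF V_lin, of "(a,c)" "(b,d)"] by simp
  have Vsc: "V (r *\<^sub>R a) (r *\<^sub>R c) = r *\<^sub>R V a c" for r a c
    using linear_scale[OF V_lin, of r "(a,c)"] by simp
  have Vsplit: "V p z = V p 0 + V 0 z" for p z using Vadd[of p 0 0 z] by simp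
  define A where "A = (\<lambda>z. Fs (V 0 z))"
  have V0lin: "linear (\<lambda>z. V 0 z)"
    by (rule linearI) (use Vadd[of 0 0] Vsc[of _ 0] in simp)+
  have Alin: "linear A" unfolding A_def using linear_compose[OF V0lin Fs_lin] by (simp add: o_def)
  have FsV: "Fs (V p z) = Fs (V p 0) + A z" for p z
    unfolding A_def using Vsplit[of p z] linear_add[OF Fs_lin, of "V p 0" "V 0 z"] by simp
  define S where "S = inv (\<lambda>z. z - A z)"
  have bijIA: "bij (\<lambda>z. z - A z)" and blS: "bounded_linear S"
    using H1a unfolding S_def A_def by auto
  have SIA: "\<And>z. S (z - A z) = z" unfolding S_def using bijIA bij_is_inj inv_f_f by fastforce
  define s where "s = onorm S"
  have s0: "s \<ge> 0" unfolding s_def using onorm_pos_le[OF blS] .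
  have normS: "norm z \<le> s * norm (z - A z)" for z
    unfolding s_def using onorm[OF blS, of "z - A z"] SIA[of z] by simp
  obtain K where K: "\<And>z. nh (A z) \<le> K * norm z" using H24b unfolding A_def by blast
  define K' where "K' = \<bar>K\<bar> + 1"
  have K'pos: "K' > 0" unfolding K'_def by simp
  have K': "\<And>z. nh (A z) \<le> K' * norm z"
  proof -
    fix z :: 'xp
    have "K * norm z \<le> K' * norm z" unfolding K'_def
      by (intro mult_right_mono) auto
    then show "nh (A z) \<le> K' * norm z" using K[of z] by linarith
  qed
  define \<epsilon> where "\<epsilon> = 1 / (2 * (s + 1) * K')"
  have \<epsilon>pos: "\<epsilon> > 0" unfolding \<epsilon>_def using s0 K'pos by simp
  have sepsK: "s * \<epsilon> * K' \<le> 1/2"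
  proof -
    have e: "(1 / (2 * (s + 1) * K')) * K' = 1 / (2 * (s + 1))" using K'pos s0 by simp
    have "s * \<epsilon> * K' = s / (2 * (s + 1))" unfolding \<epsilon>_def using e
      by (metis mult.assoc times_divide_eq_right mult_1_right)
    also have "\<dots> \<le> 1/2" using s0 by (simp add: divide_le_eq)
    finally show ?thesis .
  qed
  obtain M where M: "\<And>N x. N \<ge> M \<Longrightarrow> x \<in> Xh \<Longrightarrow> norm (P N (R N x) - x) \<le> \<epsilon> * nh x"
    using H21[OF \<epsilon>pos] by blast
  have Xh_ns: "normed_subspace Xh nh" using Xh_banach unfolding banach_subspace_def by simp
  have Xh_subsp: "subspace Xh" and nh0: "\<And>x. x \<in> Xh \<Longrightarrow> nh x \<ge> 0"
    using Xh_ns unfolding normed_subspace_def by auto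
  have AXh: "\<And>z. A z \<in> Xh" unfolding A_def using H24a .
  have Ladd: "\<And>N x y. x \<in> Xt \<Longrightarrow> y \<in> Xt \<Longrightarrow> P N (R N (x + y)) = P N (R N x) + P N (R N y)"
  proof -
    fix N x y assume xy: "x \<in> Xt" "y \<in> Xt"
    have "R N (x + y) = R N x + R N y" using R_lin[of N] xy unfolding linear_on_sub_def by auto
    moreover have "R N x \<in> XN N" "R N y \<in> XN N" using R_range xy by auto
    ultimately show "P N (R N (x + y)) = P N (R N x) + P N (R N y)"
      using P_lin[of N] unfolding linear_on_sub_def by auto
  qed
  have Lsc: "\<And>N x c. x \<in> Xt \<Longrightarrow> P N (R N (c *\<^sub>R x)) = c *\<^sub>R P N (R N x)"
  proof -
    fix N x c assume x: "x \<in> Xt"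
    have "R N (c *\<^sub>R x) = c *\<^sub>R R N x" using R_lin[of N] x unfolding linear_on_sub_def by auto
    moreover have "R N x \<in> XN N" using R_range x by auto
    ultimately show "P N (R N (c *\<^sub>R x)) = c *\<^sub>R P N (R N x)"
      using P_lin[of N] unfolding linear_on_sub_def by auto
  qed
  have AXt: "\<And>z. A z \<in> Xt" using AXh Xh_sub by auto
  show ?thesis
  proof (intro exI[of _ "Suc M"] conjI allI impI)
    show "0 < Suc M" by simp
    fix N assume NM: "Suc M \<le> N"
    then have NM': "N \<ge> M" by simp
    define T where "T = (\<lambda>z. z - P N (R N (A z)))"
    have LAlin: "linear (\<lambda>z. P N (R N (A z)))"
    proof (rule linearI)
      fix x y show "P N (R N (A (x + y))) = P N (R N (A x)) + P N (R N (A y))"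
        using Ladd[OF AXt AXt] linear_add[OF Alin] by simp
    next
      fix c x show "P N (R N (A (c *\<^sub>R x))) = c *\<^sub>R P N (R N (A x))"
        using Lsc[OF AXt] linear_scale[OF Alin] by simp
    qed
    have Tlin: "linear T" unfolding T_def using linear_compose_sub[OF linear_ident LAlin] by (simp add: id_def)
    have key: "\<And>z. norm z \<le> 2 * s * norm (T z)"
    proof -
      fix z
      have e1: "\<epsilon> * nh (A z) \<le> \<epsilon> * (K' * norm z)"
        using mult_left_mono[OF K'[of z]] \<epsilon>pos by simp
      have e: "norm (P N (R N (A z)) - A z) \<le> \<epsilon> * K' * norm z"
        using M[OF NM' AXh[of z]] e1 by (simp add: mult.assoc)
      have zz: "z - A z = T z + (P N (R N (A z)) - A z)" unfolding T_def by simp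
      have "norm (z - A z) \<le> norm (T z) + norm (P N (R N (A z)) - A z)"
        unfolding zz by (rule norm_triangle_ineq)
      then have ne: "norm (z - A z) \<le> norm (T z) + \<epsilon> * K' * norm z" using e by linarith
      have "s * norm (z - A z) \<le> s * norm (T z) + s * \<epsilon> * K' * norm z"
        using mult_left_mono[OF ne s0] by (simp add: distrib_left mult.assoc)
      moreover have "s * \<epsilon> * K' * norm z \<le> 1/2 * norm z"
        using sepsK by (intro mult_right_mono) auto
      ultimately show "norm z \<le> 2 * s * norm (T z)" using normS[of z] by linarith
    qed
    have injT: "inj T"
    proof (rule injI)
      fix x y assume "T x = T y"
      then have "T (x - y) = 0" using linear_diff[OF Tlin] by simp
      then show "x = y" using key[of "x - y"] by simp
    qed
    obtain B where B: "finite B" "XN N = span B" using XN_fin by blast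
    have Pls: "linear_on_sub (span B) (P N)" using P_lin[of N] B by simp
    have PB: "\<And>x. x \<in> XN N \<Longrightarrow> P N x \<in> span (P N ` B)"
      using image_span_sub[OF Pls] B by blast
    have LAW: "P N (R N (A z)) \<in> span (P N ` B)" for z
    proof -
      have "R N (A z) \<in> XN N" using R_range AXt[of z] by blast
      then show ?thesis by (rule PB)
    qed
    have TW: "T ` span (P N ` B) \<subseteq> span (P N ` B)"
    proof (rule image_subsetI)
      fix x assume x: "x \<in> span (P N ` B)"
      show "T x \<in> span (P N ` B)" unfolding T_def by (rule span_diff[OF x LAW])
    qed
    have surjT: "surj T"
    proof -
      { fix y
        have "P N (R N (A y)) \<in> T ` span (P N ` B)"
          using fin_surj[OF Tlin injT finite_imageI[OF B(1)] TW] LAW[of y] by blast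
        then obtain w where w: "T w = P N (R N (A y))" by (metis imageE)
        have "T (y + w) = T y + T w" by (rule linear_add[OF Tlin])
        also have "\<dots> = y" using w unfolding T_def by simp
        finally have "y \<in> range T" by (metis rangeI) }
      then show ?thesis by blast
    qed
    have bijT: "bij T" using injT surjT bij_def by blast
    obtain g where g: "linear g" "g \<circ> T = id" using linear_injective_left_inverse[OF Tlin injT] by blast
    have invg: "inv T = g"
    proof
      fix y
      obtain x where "y = T x" using surjT by blast
      then show "inv T y = g y" using inv_f_f[OF injT, of x] fun_cong[OF g(2), of x] by simp
    qed
    have TinvT: "\<And>y. T (inv T y) = y" using surj_f_inv_f[OF surjT] .
    have invbd: "\<And>y. norm (inv T y) \<le> 2 * s * norm y"
    proof -
      fix y show "norm (inv T y) \<le> 2 * s * norm y" using key[of "inv T y"] TinvT[of y] by simp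
    qed
    have blinv: "bounded_linear (inv T)"
      unfolding invg
    proof (rule bounded_linear_intro)
      fix x y show "g (x + y) = g x + g y" by (rule linear_add[OF g(1)])
    next
      fix r x show "g (r *\<^sub>R x) = r *\<^sub>R g x" by (rule linear_scale[OF g(1)])
    next
      fix x show "norm (g x) \<le> norm x * (2 * s)" using invbd[of x] invg by (simp add: mult.commute)
    qed
    show "bij (\<lambda>z. z - P N (R N (Fs (V 0 z))))" using bijT unfolding T_def A_def .
    show "bounded_linear (inv (\<lambda>z. z - P N (R N (Fs (V 0 z)))))" using blinv unfolding T_def A_def .
    have "onorm (inv T) \<le> 2 * s" using onorm_bound[of "2 * s" "inv T"] s0 invbd by simp
    then show "onorm (inv (\<lambda>z. z - P N (R N (Fs (V 0 z))))) \<le> 2 * onorm (inv (\<lambda>z. z - Fs (V 0 z)))"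
      unfolding T_def A_def s_def S_def .
    show "\<forall>\<phi>\<in>XhX. (\<exists>!w. w = P N (R N (Fs (V \<phi> w)))) \<and>
             (\<forall>w zs. w = P N (R N (Fs (V \<phi> w))) \<longrightarrow> zs = Fs (V \<phi> zs) \<longrightarrow>
                norm (w - zs) \<le> 2 * onorm (inv (\<lambda>z. z - Fs (V 0 z))) * norm (P N (R N zs) - zs))"
    proof (intro ballI conjI allI impI)
      fix \<phi> assume \<phi>: "\<phi> \<in> XhX"
      define b where "b = Fs (V \<phi> 0)"
      have bXh: "b \<in> Xh" unfolding b_def using H31a[OF \<phi>] .
      have bXt: "b \<in> Xt" using bXh Xh_sub by auto
      have eq: "\<And>w. (w = P N (R N (Fs (V \<phi> w)))) \<longleftrightarrow> T w = P N (R N b)"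
      proof -
        fix w
        have "P N (R N (Fs (V \<phi> w))) = P N (R N b) + P N (R N (A w))"
          using FsV[of \<phi> w] Ladd[OF bXt AXt] unfolding b_def by simp
        then show "(w = P N (R N (Fs (V \<phi> w)))) \<longleftrightarrow> T w = P N (R N b)"
          unfolding T_def by (auto simp: algebra_simps)
      qed
      show "\<exists>!w. w = P N (R N (Fs (V \<phi> w)))"
        unfolding eq
      proof (rule ex1I[of _ "inv T (P N (R N b))"])
        show "T (inv T (P N (R N b))) = P N (R N b)" by (rule TinvT)
      next
        fix w assume "T w = P N (R N b)"
        then have "T w = T (inv T (P N (R N b)))" using TinvT by simp
        then show "w = inv T (P N (R N b))" by (rule injD[OF injT])
      qed
      fix w zs assume w: "w = P N (R N (Fs (V \<phi> w)))" and zs: "zs = Fs (V \<phi> zs)"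
      have Tw: "T w = P N (R N b)" using eq w by blast
      have zsb: "zs = b + A zs" using zs FsV[of \<phi> zs] unfolding b_def by simp
      have "b + A zs \<in> Xh" by (rule subspace_add[OF Xh_subsp bXh AXh])
      then have zsXt: "zs \<in> Xt" using zsb Xh_sub by auto
      have "T (w - zs) = T w - T zs" using linear_diff[OF Tlin] .
      also have "\<dots> = P N (R N b) - T zs" using Tw by simp
      also have "\<dots> = P N (R N b) + P N (R N (A zs)) - zs" unfolding T_def by simp
      also have "\<dots> = P N (R N zs) - zs" using Ladd[OF bXt AXt, of N zs] zsb by simp
      finally have "T (w - zs) = P N (R N zs) - zs" .
      then show "norm (w - zs) \<le> 2 * onorm (inv (\<lambda>z. z - Fs (V 0 z))) * norm (P N (R N zs) - zs)"
        using key[of "w - zs"] unfolding s_def S_def A_def by simp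
    qed
  qed
qed

end
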